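(* Let $G$ be a graph with no edge $e$ satisfying $|F_e|\ge 4$, no induced chordless cycle on 4 vertices, and no induced path on at least 7 vertices, and let $u,v,w$ be an induced path on three vertices in $G$, with $B_i$, $E_1$ and $j$ defined from $u,v,w$ as in the context. If $j\ge 2$, then the induced subgraph $G[B_2\cup\cdots\cup B_j]$ (meaning $G[\bigcup_{i\ge2}B_i]$ if $j=\infty$) is a collection of at most $|E_1|$ vertex-disjoint paths, i.e., each of its connected components is a path (possibly a single vertex) and it has at most $|E_1|$ connected components.
   Context: All graphs are finite, simple and undirected. For an edge $e$ of $G$, $F_e$ denotes the set of all edges $e'$ of $G$ such that $V(e)\cup V(e')$ induces a path on three vertices in $G$. Let $u,v,w$ be an induced path on three vertices ($uv,vw\in E(G)$, $uw\notin E(G)$), and $A=\{u,v,w\}$. $B$ is the set of vertices not in $A$ with exactly one or two neighbors in $A$; $C$ is the set of vertices adjacent to all three vertices of $A$; $D$ is the set of vertices not in $A\cup B\cup C$ with at least one neighbor in $C$. For $i\ge1$, $B_i$ is the set of vertices $x\notin A\cup B\cup C\cup D$ whose distance in $G$ to the set $B$ is exactly $i$; $B_0=B$, $B_{-1}=A$. For $i\ge0$, $E_i$ is the set of edges with one endpoint in $B_i$ and the other in $B_{i+1}$. $j$ is the minimum index $i\ge0$ such that there is an edge $e\in E_i$ with $|F_e|\ge3$, and $j=\infty$ if no such index exists. *)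

theory Defs
  imports Main "HOL-Library.Extended_Nat"
begin

definition simple_graph :: "'a set \<Rightarrow> ('a \<Rightarrow> 'a \<Rightarrow> bool) \<Rightarrow> bool" where
  "simple_graph V adj \<longleftrightarrow> finite V \<and> (\<forall>x y. adj x y \<longrightarrow> adj y x)
     \<and> (\<forall>x. \<not> adj x x) \<and> (\<forall>x y. adj x y \<longrightarrow> x \<in> V \<and> y \<in> V)"

definition edges :: "('a \<Rightarrow> 'a \<Rightarrow> bool) \<Rightarrow> 'a set set" where
  "edges adj = {{x, y} | x y. adj x y}"

definition induces_P3 :: "('a \<Rightarrow> 'a \<Rightarrow> bool) \<Rightarrow> 'a set \<Rightarrow> bool" where
  "induces_P3 adj S \<longleftrightarrow> (\<exists>a b c. a \<noteq> b \<and> b \<noteq> c \<and> a \<noteq> c \<and> S = {a, b, c}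
      \<and> adj a b \<and> adj b c \<and> \<not> adj a c)"

definition Fset :: "('a \<Rightarrow> 'a \<Rightarrow> bool) \<Rightarrow> 'a set \<Rightarrow> 'a set set" where
  "Fset adj e = {e' \<in> edges adj. induces_P3 adj (e \<union> e')}"

definition induced_path :: "'a set \<Rightarrow> ('a \<Rightarrow> 'a \<Rightarrow> bool) \<Rightarrow> 'a list \<Rightarrow> bool" where
  "induced_path V adj xs \<longleftrightarrow> xs \<noteq> [] \<and> distinct xs \<and> set xs \<subseteq> V \<and>
     (\<forall>i < length xs. \<forall>k < length xs. adj (xs ! i) (xs ! k) \<longleftrightarrow> (i = k + 1 \<or> k = i + 1))"

definition induced_C4 :: "('a \<Rightarrow> 'a \<Rightarrow> bool) \<Rightarrow> 'a \<Rightarrow> 'a \<Rightarrow> 'a \<Rightarrow> 'a \<Rightarrow> bool" where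
  "induced_C4 adj a b c d \<longleftrightarrow> distinct [a, b, c, d] \<and> adj a b \<and> adj b c \<and> adj c d \<and> adj d a
     \<and> \<not> adj a c \<and> \<not> adj b d"

definition walk_in :: "('a \<Rightarrow> 'a \<Rightarrow> bool) \<Rightarrow> 'a set \<Rightarrow> 'a list \<Rightarrow> bool" where
  "walk_in adj S xs \<longleftrightarrow> xs \<noteq> [] \<and> set xs \<subseteq> S \<and>
     (\<forall>i. i + 1 < length xs \<longrightarrow> adj (xs ! i) (xs ! (i + 1)))"

definition dist_le :: "'a set \<Rightarrow> ('a \<Rightarrow> 'a \<Rightarrow> bool) \<Rightarrow> 'a \<Rightarrow> 'a set \<Rightarrow> nat \<Rightarrow> bool" where
  "dist_le V adj x T n \<longleftrightarrow> (\<exists>xs. walk_in adj V xs \<and> hd xs = x \<and> last xs \<in> T \<and> length xs \<le> n + 1)"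

definition Aset :: "'a \<Rightarrow> 'a \<Rightarrow> 'a \<Rightarrow> 'a set" where
  "Aset u v w = {u, v, w}"

definition Bbase :: "'a set \<Rightarrow> ('a \<Rightarrow> 'a \<Rightarrow> bool) \<Rightarrow> 'a \<Rightarrow> 'a \<Rightarrow> 'a \<Rightarrow> 'a set" where
  "Bbase V adj u v w = {x \<in> V - Aset u v w.
      card {y \<in> Aset u v w. adj x y} = 1 \<or> card {y \<in> Aset u v w. adj x y} = 2}"

definition Cset :: "'a set \<Rightarrow> ('a \<Rightarrow> 'a \<Rightarrow> bool) \<Rightarrow> 'a \<Rightarrow> 'a \<Rightarrow> 'a \<Rightarrow> 'a set" where
  "Cset V adj u v w = {x \<in> V. adj x u \<and> adj x v \<and> adj x w}"

definition Dset :: "'a set \<Rightarrow> ('a \<Rightarrow> 'a \<Rightarrow> bool) \<Rightarrow> 'a \<Rightarrow> 'a \<Rightarrow> 'a \<Rightarrow> 'a set" where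
  "Dset V adj u v w = {x \<in> V - (Aset u v w \<union> Bbase V adj u v w \<union> Cset V adj u v w).
      \<exists>y \<in> Cset V adj u v w. adj x y}"

definition Bl :: "'a set \<Rightarrow> ('a \<Rightarrow> 'a \<Rightarrow> bool) \<Rightarrow> 'a \<Rightarrow> 'a \<Rightarrow> 'a \<Rightarrow> nat \<Rightarrow> 'a set" where
  "Bl V adj u v w i = (if i = 0 then Bbase V adj u v w else
     {x \<in> V - (Aset u v w \<union> Bbase V adj u v w \<union> Cset V adj u v w \<union> Dset V adj u v w).
        dist_le V adj x (Bbase V adj u v w) i \<and> \<not> dist_le V adj x (Bbase V adj u v w) (i - 1)})"

definition Eset :: "'a set \<Rightarrow> ('a \<Rightarrow> 'a \<Rightarrow> bool) \<Rightarrow> 'a \<Rightarrow> 'a \<Rightarrow> 'a \<Rightarrow> nat \<Rightarrow> 'a set set" where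
  "Eset V adj u v w i = {{x, y} | x y. adj x y \<and> x \<in> Bl V adj u v w i \<and> y \<in> Bl V adj u v w (Suc i)}"

definition jidx :: "'a set \<Rightarrow> ('a \<Rightarrow> 'a \<Rightarrow> bool) \<Rightarrow> 'a \<Rightarrow> 'a \<Rightarrow> 'a \<Rightarrow> enat" where
  "jidx V adj u v w =
     (if \<exists>i. \<exists>e \<in> Eset V adj u v w i. card (Fset adj e) \<ge> 3
      then enat (LEAST i. \<exists>e \<in> Eset V adj u v w i. card (Fset adj e) \<ge> 3)
      else \<infinity>)"

definition components :: "('a \<Rightarrow> 'a \<Rightarrow> bool) \<Rightarrow> 'a set \<Rightarrow> 'a set set" where
  "components adj S = {{y. \<exists>xs. walk_in adj S xs \<and> hd xs = x \<and> last xs = y} | x. x \<in> S}"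

end

theory Submission imports Defs begin

locale cg =
  fixes V :: "'a set" and adj :: "'a \<Rightarrow> 'a \<Rightarrow> bool" and u v w :: 'a
  assumes sg: "simple_graph V adj"
    and F4: "\<forall>e \<in> edges adj. card (Fset adj e) < 4"
    and noC4: "\<forall>a b c d. \<not> induced_C4 adj a b c d"
    and noP7: "\<forall>xs. induced_path V adj xs \<longrightarrow> length xs < 7"
    and uV: "u \<in> V" and vV: "v \<in> V" and wV: "w \<in> V" and uw: "u \<noteq> w"
    and auv: "adj u v" and avw: "adj v w" and nuw: "\<not> adj u w"
    and J2: "jidx V adj u v w \<ge> 2"
begin

abbreviation "A \<equiv> Aset u v w"
abbreviation "BB \<equiv> Bbase V adj u v w"
abbreviation "CC \<equiv> Cset V adj u v w"
abbreviation "DD \<equiv> Dset V adj u v w"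
abbreviation "L i \<equiv> Bl V adj u v w i"
abbreviation "J \<equiv> jidx V adj u v w"
abbreviation "dl x n \<equiv> dist_le V adj x BB n"

lemma sym: "adj x y \<Longrightarrow> adj y x" using sg unfolding simple_graph_def by blast
lemma irr: "\<not> adj x x" using sg unfolding simple_graph_def by blast
lemma inV: "adj x y \<Longrightarrow> x \<in> V \<and> y \<in> V" using sg unfolding simple_graph_def by blast
lemma finV: "finite V" using sg unfolding simple_graph_def by blast
lemma neq: "adj x y \<Longrightarrow> x \<noteq> y" using irr by blast

lemma uv: "u \<noteq> v" using neq auv by blast
lemma vw: "v \<noteq> w" using neq avw by blast

lemma fin_edges: "finite (edges adj)"
proof -
  have "edges adj \<subseteq> Pow V" unfolding edges_def using inV by blast
  then show ?thesis using finV finite_subset by blast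
qed

lemma fin_F: "finite (Fset adj e)"
  using fin_edges unfolding Fset_def by simp

lemma edge_in: "adj x y \<Longrightarrow> {x, y} \<in> edges adj" unfolding edges_def by blast

lemma Fmem: "adj a b \<Longrightarrow> adj b c \<Longrightarrow> \<not> adj a c \<Longrightarrow> a \<noteq> c \<Longrightarrow> {b, c} \<in> Fset adj {a, b}"
  unfolding Fset_def induces_P3_def
  apply (intro CollectI conjI edge_in, assumption)
  apply (rule exI[of _ a], rule exI[of _ b], rule exI[of _ c])
  using neq by auto

lemma Fmem': "adj a b \<Longrightarrow> adj b c \<Longrightarrow> \<not> adj a c \<Longrightarrow> a \<noteq> c \<Longrightarrow> {b, c} \<in> Fset adj {b, a}"
  using Fmem by (metis insert_commute)

lemma F3: "card (Fset adj e) < 3 \<Longrightarrow> e1 \<in> Fset adj e \<Longrightarrow> e2 \<in> Fset adj e \<Longrightarrow> e3 \<in> Fset adj e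
  \<Longrightarrow> e1 \<noteq> e2 \<Longrightarrow> e1 \<noteq> e3 \<Longrightarrow> e2 \<noteq> e3 \<Longrightarrow> False"
proof -
  assume a: "card (Fset adj e) < 3" "e1 \<in> Fset adj e" "e2 \<in> Fset adj e" "e3 \<in> Fset adj e"
    "e1 \<noteq> e2" "e1 \<noteq> e3" "e2 \<noteq> e3"
  have "card {e1, e2, e3} \<le> card (Fset adj e)" using a fin_F by (intro card_mono) auto
  moreover have "card {e1, e2, e3} = 3" using a by simp
  ultimately show False using a by simp
qed

lemma Acount: "x \<in> V \<Longrightarrow> x \<notin> A \<Longrightarrow> x \<notin> BB \<Longrightarrow> x \<notin> CC \<Longrightarrow> y \<in> A \<Longrightarrow> \<not> adj x y"
proof -
  assume a: "x \<in> V" "x \<notin> A" "x \<notin> BB" "x \<notin> CC" "y \<in> A"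
  have d: "u \<noteq> v" "v \<noteq> w" "u \<noteq> w" using uv vw uw by auto
  have nc: "\<not> (adj x u \<and> adj x v \<and> adj x w)" using a(1,4) unfolding Cset_def by auto
  have nb: "\<not> (card {y \<in> A. adj x y} = 1 \<or> card {y \<in> A. adj x y} = 2)"
    using a(1,2,3) unfolding Bbase_def by auto
  show "\<not> adj x y"
  proof
    assume xy: "adj x y"
    have eq: "{y \<in> A. adj x y} = (if adj x u then {u} else {}) \<union> (if adj x v then {v} else {}) \<union> (if adj x w then {w} else {})"
      by (auto simp: Aset_def)
    show False
    proof (cases "adj x u"; cases "adj x v"; cases "adj x w")
    qed (use nc nb xy a(5) d eq in \<open>auto simp: Aset_def\<close>)
  qed
qed

lemma BB_A: "x \<in> BB \<Longrightarrow> \<exists>a \<in> A. adj x a"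
proof -
  assume "x \<in> BB"
  then have "card {y \<in> A. adj x y} \<noteq> 0" unfolding Bbase_def by auto
  then have "{y \<in> A. adj x y} \<noteq> {}" by (metis card.empty)
  then show ?thesis by blast
qed

lemma BB_props: "x \<in> BB \<Longrightarrow> x \<in> V \<and> x \<notin> A \<and> x \<notin> CC \<and> x \<notin> DD"
proof -
  assume x: "x \<in> BB"
  have "x \<notin> CC"
  proof
    assume "x \<in> CC"
    then have "{y \<in> A. adj x y} = {u, v, w}" unfolding Cset_def Aset_def by auto
    then have "card {y \<in> A. adj x y} = 3" using uv vw uw by simp
    then show False using x unfolding Bbase_def by auto
  qed
  then show ?thesis using x unfolding Bbase_def Dset_def by auto
qed

lemma L_V: "x \<in> L i \<Longrightarrow> x \<in> V \<and> x \<notin> A \<and> x \<notin> CC"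
  using BB_props unfolding Bl_def by (auto split: if_splits)

lemma L_pos: "x \<in> L i \<Longrightarrow> 0 < i \<Longrightarrow> x \<notin> BB \<and> x \<notin> DD"
  unfolding Bl_def by (auto split: if_splits)

lemma L_0: "L 0 = BB" unfolding Bl_def by simp

lemma dl0: "dl x 0 \<longleftrightarrow> x \<in> V \<and> x \<in> BB"
proof
  assume "dl x 0"
  then obtain xs where xs: "walk_in adj V xs" "hd xs = x" "last xs \<in> BB" "length xs \<le> 1"
    unfolding dist_le_def by auto
  then have "xs \<noteq> []" unfolding walk_in_def by auto
  with xs(4) have "xs = [hd xs]" by (cases xs) auto
  then show "x \<in> V \<and> x \<in> BB" using xs unfolding walk_in_def by (metis last.simps list.set_intros(1) subsetD)
next
  assume "x \<in> V \<and> x \<in> BB"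
  then show "dl x 0" unfolding dist_le_def walk_in_def by (intro exI[of _ "[x]"]) auto
qed

lemma dl_mono: "dl x n \<Longrightarrow> n \<le> m \<Longrightarrow> dl x m"
  unfolding dist_le_def by force

lemma walk_cons: "walk_in adj S (x # xs) \<longleftrightarrow> x \<in> S \<and> (xs = [] \<or> (adj x (hd xs) \<and> walk_in adj S xs))"
proof (cases xs)
  case Nil then show ?thesis unfolding walk_in_def by auto
next
  case (Cons y ys)
  show ?thesis
  proof
    assume a: "walk_in adj S (x # xs)"
    from a have H: "\<forall>i. i + 1 < length (x # xs) \<longrightarrow> adj ((x # xs) ! i) ((x # xs) ! (i + 1))"
      unfolding walk_in_def by blast
    have "\<forall>i. i + 1 < length xs \<longrightarrow> adj (xs ! i) (xs ! (i + 1))"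
    proof (intro allI impI)
      fix i assume "i + 1 < length xs"
      then show "adj (xs ! i) (xs ! (i + 1))" using H[rule_format, of "Suc i"] by simp
    qed
    moreover have "adj x (hd xs)" using H[rule_format, of 0] Cons by simp
    ultimately show "x \<in> S \<and> (xs = [] \<or> (adj x (hd xs) \<and> walk_in adj S xs))"
      using a Cons unfolding walk_in_def by auto
  next
    assume a: "x \<in> S \<and> (xs = [] \<or> (adj x (hd xs) \<and> walk_in adj S xs))"
    then have a2: "adj x y" "walk_in adj S xs" using Cons by auto
    have "\<forall>i. i + 1 < length (x # xs) \<longrightarrow> adj ((x # xs) ! i) ((x # xs) ! (i + 1))"
    proof (intro allI impI)
      fix i assume i: "i + 1 < length (x # xs)"
      show "adj ((x # xs) ! i) ((x # xs) ! (i + 1))"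
      proof (cases i)
        case 0 then show ?thesis using a2 Cons by simp
      next
        case (Suc k) then show ?thesis using a2(2) i unfolding walk_in_def by simp
      qed
    qed
    then show "walk_in adj S (x # xs)" using a a2 unfolding walk_in_def by auto
  qed
qed

lemma dl_step: "adj x y \<Longrightarrow> dl y n \<Longrightarrow> dl x (Suc n)"
proof -
  assume a: "adj x y" "dl y n"
  then obtain xs where xs: "walk_in adj V xs" "hd xs = y" "last xs \<in> BB" "length xs \<le> n + 1"
    unfolding dist_le_def by auto
  then have ne: "xs \<noteq> []" unfolding walk_in_def by auto
  have "walk_in adj V (x # xs)" using walk_cons xs a inV ne by auto
  then show ?thesis unfolding dist_le_def using xs ne by (intro exI[of _ "x # xs"]) auto
qed

lemma dl_split: "dl x (Suc n) \<Longrightarrow> x \<notin> BB \<Longrightarrow> \<exists>y. adj x y \<and> dl y n"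
proof -
  assume a: "dl x (Suc n)" "x \<notin> BB"
  then obtain xs where xs: "walk_in adj V xs" "hd xs = x" "last xs \<in> BB" "length xs \<le> Suc n + 1"
    unfolding dist_le_def by auto
  then have ne: "xs \<noteq> []" unfolding walk_in_def by auto
  then obtain ys where ys: "xs = x # ys" using xs(2) by (cases xs) auto
  have "ys \<noteq> []" using ys xs(3) a(2) by auto
  then have "adj x (hd ys)" "walk_in adj V ys" using walk_cons xs(1) ys by auto
  moreover have "last ys \<in> BB" "length ys \<le> n + 1" using ys xs \<open>ys \<noteq> []\<close> by auto
  ultimately show ?thesis unfolding dist_le_def by blast
qed

lemma L_dist: "x \<in> L i \<Longrightarrow> dl x i"
  using dl0 BB_props unfolding Bl_def by (auto split: if_splits)

lemma L_nd: "x \<in> L i \<Longrightarrow> 0 < i \<Longrightarrow> \<not> dl x (i - 1)"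
  unfolding Bl_def by (auto split: if_splits)

lemma L_uniq: "x \<in> L i \<Longrightarrow> x \<in> L k \<Longrightarrow> i = k"
proof (rule ccontr)
  assume a: "x \<in> L i" "x \<in> L k" "i \<noteq> k"
  show False
  proof (cases "i < k")
    case True
    then have "i \<le> k - 1" "0 < k" by auto
    then show False using a L_dist[of x i] L_nd[of x k] dl_mono[of x i "k-1"] by blast
  next
    case False
    then have "k \<le> i - 1" "0 < i" using a by auto
    then show False using a L_dist[of x k] L_nd[of x i] dl_mono[of x k "i-1"] by blast
  qed
qed

lemma L_adj: "adj p q \<Longrightarrow> p \<in> L k \<Longrightarrow> q \<in> L m \<Longrightarrow> m \<le> Suc k"
proof (rule ccontr)
  assume a: "adj p q" "p \<in> L k" "q \<in> L m" "\<not> m \<le> Suc k"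
  have "dl q (Suc k)" using dl_step[OF sym[OF a(1)] L_dist[OF a(2)]] .
  then have "dl q (m - 1)" using dl_mono a(4) by simp
  then show False using L_nd[OF a(3)] a(4) by simp
qed

lemma L_far: "p \<in> L m \<Longrightarrow> q \<in> L k \<Longrightarrow> Suc (Suc k) \<le> m \<Longrightarrow> \<not> adj p q \<and> p \<noteq> q"
  using L_adj[of q p k m] sym L_uniq by fastforce

lemma noA: "x \<in> L i \<Longrightarrow> 0 < i \<Longrightarrow> a \<in> A \<Longrightarrow> \<not> adj x a \<and> x \<noteq> a"
  using Acount L_V L_pos by blast

lemma noC: "x \<in> L i \<Longrightarrow> 0 < i \<Longrightarrow> c \<in> CC \<Longrightarrow> \<not> adj x c"
proof
  assume a: "x \<in> L i" "0 < i" "c \<in> CC" "adj x c"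
  then have "x \<in> DD" using L_V L_pos unfolding Dset_def by blast
  then show False using L_pos a by blast
qed

lemma noD: "x \<in> L i \<Longrightarrow> 0 < i \<Longrightarrow> adj x d \<Longrightarrow> d \<notin> DD"
proof
  assume a: "x \<in> L i" "0 < i" "adj x d" "d \<in> DD"
  then obtain c where c: "c \<in> CC" "adj d c" and d: "d \<in> V" "d \<notin> A" "d \<notin> BB" "d \<notin> CC"
    unfolding Dset_def by auto
  have nd: "\<not> adj d u" "\<not> adj d v" "\<not> adj d w" "d \<noteq> u" "d \<noteq> v" "d \<noteq> w"
    using Acount[OF d] d(2) by (auto simp: Aset_def)
  have cc: "adj c u" "adj c v" "adj c w" using c(1) unfolding Cset_def by auto
  have xc: "\<not> adj x c" "x \<noteq> c" using noC[OF a(1,2) c(1)] L_V[OF a(1)] c(1) by auto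
  have m: "{c, u} \<in> Fset adj {c, d}" "{c, v} \<in> Fset adj {c, d}" "{c, w} \<in> Fset adj {c, d}"
    using Fmem'[OF c(2)] cc nd by auto
  have m2: "{d, x} \<in> Fset adj {c, d}" using Fmem[OF sym[OF c(2)] sym[OF a(3)]] xc sym[of c x] by blast
  have le: "card {{c, u}, {c, v}, {c, w}, {d, x}} \<le> card (Fset adj {c, d})"
    using m m2 fin_F by (intro card_mono) auto
  have dc: "d \<noteq> c" using neq c(2) by blast
  have ne: "{c, u} \<noteq> {c, v}" "{c, u} \<noteq> {c, w}" "{c, v} \<noteq> {c, w}"
      "{c, u} \<noteq> {d, x}" "{c, v} \<noteq> {d, x}" "{c, w} \<noteq> {d, x}"
  proof -
    have cu: "c \<noteq> u" "c \<noteq> v" "c \<noteq> w" using neq cc by auto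
    have "u \<notin> {c, v}" "u \<notin> {c, w}" "v \<notin> {c, w}" "c \<notin> {d, x}"
      using cu uv vw uw dc xc by auto
    then show "{c, u} \<noteq> {c, v}" "{c, u} \<noteq> {c, w}" "{c, v} \<noteq> {c, w}"
      "{c, u} \<noteq> {d, x}" "{c, v} \<noteq> {d, x}" "{c, w} \<noteq> {d, x}" by blast+
  qed
  have c4: "card {{c, u}, {c, v}, {c, w}, {d, x}} = 4"
  proof -
    have h: "{c, u} \<notin> {{c, v}, {c, w}, {d, x}}" "{c, v} \<notin> {{c, w}, {d, x}}" "{c, w} \<notin> {{d, x}}"
      by (simp only: insert_iff empty_iff ne simp_thms)+
    have "card {{c, u}, {c, v}, {c, w}, {d, x}} = Suc (card {{c, v}, {c, w}, {d, x}})"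
      by (rule card_insert_disjoint[OF _ h(1)]) simp
    moreover have "card {{c, v}, {c, w}, {d, x}} = Suc (card {{c, w}, {d, x}})"
      by (rule card_insert_disjoint[OF _ h(2)]) simp
    moreover have "card {{c, w}, {d, x}} = Suc (card {{d, x}})"
      by (rule card_insert_disjoint[OF _ h(3)]) simp
    ultimately show ?thesis by simp
  qed
  have lt: "card (Fset adj {c, d}) < 4" using F4 edge_in[OF sym[OF c(2)]] by blast
  show False using le c4 lt by linarith
qed

lemma nbr: "x \<in> L i \<Longrightarrow> 0 < i \<Longrightarrow> adj x y \<Longrightarrow> \<exists>m. y \<in> L m"
proof -
  assume a: "x \<in> L i" "0 < i" "adj x y"
  have y: "y \<in> V" "y \<notin> A" "y \<notin> CC" "y \<notin> DD"
  proof -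
    show "y \<in> V" using inV[OF a(3)] by blast
    show "y \<notin> A" using noA[OF a(1,2)] a(3) by blast
    show "y \<notin> CC" using noC[OF a(1,2)] a(3) by blast
    show "y \<notin> DD" using noD[OF a] .
  qed
  show ?thesis
  proof (cases "y \<in> BB")
    case True then show ?thesis using L_0 by blast
  next
    case False
    have "dl y (Suc i)" using dl_step[OF sym[OF a(3)] L_dist[OF a(1)]] .
    define m where "m = (LEAST n. dl y n)"
    have dm: "dl y m" unfolding m_def by (rule LeastI, fact)
    have m0: "m \<noteq> 0"
    proof
      assume "m = 0"
      then have "dl y 0" using dm by simp
      then show False using dl0[of y] False by blast
    qed
    have "\<not> dl y (m - 1)" using m0 not_less_Least[of "m - 1" "\<lambda>n. dl y n"] unfolding m_def by simp
    then have "y \<in> L m" using y False dm m0 unfolding Bl_def by simp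
    then show ?thesis by blast
  qed
qed

lemma parent: "x \<in> L i \<Longrightarrow> 0 < i \<Longrightarrow> \<exists>p \<in> L (i - 1). adj x p"
proof -
  assume a: "x \<in> L i" "0 < i"
  have "dl x (Suc (i - 1))" using L_dist[OF a(1)] a(2) by simp
  then obtain y where y: "adj x y" "dl y (i - 1)" using dl_split L_pos[OF a] by blast
  then obtain m where m: "y \<in> L m" using nbr a by blast
  have "i \<le> Suc m" using L_adj[OF sym[OF y(1)] m a(1)] by simp
  moreover have "\<not> (m > i - 1)"
  proof
    assume "m > i - 1"
    then have "i - 1 \<le> m - 1" "0 < m" by auto
    then show False using L_nd[OF m] y(2) dl_mono[of y "i - 1" "m - 1"] by blast
  qed
  ultimately have "m = i - 1" by simp
  then show ?thesis using y m by blast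
qed

definition lowv :: "nat \<Rightarrow> 'a \<Rightarrow> bool" where
  "lowv i r \<longleftrightarrow> (i = 0 \<longrightarrow> r \<in> A) \<and> (0 < i \<longrightarrow> r \<in> L (i - 1))"

lemma low: "x \<in> L i \<Longrightarrow> \<exists>r. adj x r \<and> lowv i r"
proof (cases i)
  case 0
  assume "x \<in> L i"
  then have "x \<in> BB" using 0 L_0 by simp
  then show ?thesis using BB_A 0 unfolding lowv_def by blast
next
  case (Suc n)
  assume "x \<in> L i"
  then show ?thesis using parent[of x i] Suc unfolding lowv_def by auto
qed

lemma low_far: "lowv i r \<Longrightarrow> p \<in> L m \<Longrightarrow> Suc i \<le> m \<Longrightarrow> \<not> adj p r \<and> p \<noteq> r"
proof (cases i)
  case 0
  assume a: "lowv i r" "p \<in> L m" "Suc i \<le> m"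
  then have "r \<in> A" "0 < m" using 0 unfolding lowv_def by auto
  then show ?thesis using noA[OF a(2)] by blast
next
  case (Suc n)
  assume a: "lowv i r" "p \<in> L m" "Suc i \<le> m"
  then have "r \<in> L n" "Suc (Suc n) \<le> m" using Suc unfolding lowv_def by auto
  then show ?thesis using L_far[OF a(2)] by blast
qed

lemma good: "enat k < J \<Longrightarrow> e \<in> Eset V adj u v w k \<Longrightarrow> card (Fset adj e) < 3"
proof (rule ccontr)
  assume a: "enat k < J" "e \<in> Eset V adj u v w k" "\<not> card (Fset adj e) < 3"
  then have ex: "\<exists>i. \<exists>e \<in> Eset V adj u v w i. card (Fset adj e) \<ge> 3"
    by (intro exI[of _ k] bexI[of _ e]) auto
  then have "J = enat (LEAST i. \<exists>e \<in> Eset V adj u v w i. card (Fset adj e) \<ge> 3)"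
    unfolding jidx_def by simp
  then have "k < (LEAST i. \<exists>e \<in> Eset V adj u v w i. card (Fset adj e) \<ge> 3)" using a(1) by simp
  then have "\<not> (\<exists>e \<in> Eset V adj u v w k. card (Fset adj e) \<ge> 3)" by (rule not_less_Least)
  then show False using a by auto
qed

lemma Emem: "adj x y \<Longrightarrow> x \<in> L k \<Longrightarrow> y \<in> L (Suc k) \<Longrightarrow> {x, y} \<in> Eset V adj u v w k"
  unfolding Eset_def by blast

lemma one_child: "p \<in> L k \<Longrightarrow> 0 < k \<Longrightarrow> enat k \<le> J \<Longrightarrow> c1 \<in> L (Suc k) \<Longrightarrow> c2 \<in> L (Suc k)
  \<Longrightarrow> adj p c1 \<Longrightarrow> adj p c2 \<Longrightarrow> c1 = c2"
proof (rule ccontr)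
  assume a: "p \<in> L k" "0 < k" "enat k \<le> J" "c1 \<in> L (Suc k)" "c2 \<in> L (Suc k)"
    "adj p c1" "adj p c2" "c1 \<noteq> c2"
  obtain q where q: "q \<in> L (k - 1)" "adj p q" using parent a by blast
  obtain r where r: "adj q r" "lowv (k - 1) r" using low[OF q(1)] by blast
  have qp: "adj q p" using sym[OF q(2)] .
  have pr: "\<not> adj p r" "p \<noteq> r" using low_far[OF r(2) a(1)] a(2) by auto
  have kk: "Suc (k - 1) = k" using a(2) by simp
  have e: "{q, p} \<in> Eset V adj u v w (k - 1)" using Emem[OF qp q(1)] kk a(1) by simp
  have gd: "card (Fset adj {q, p}) < 3" using good[OF _ e] a(2,3)
    by (metis diff_less enat_ord_simps(2) less_le_trans order_le_less_trans zero_less_one)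
  have f1: "{q, r} \<in> Fset adj {q, p}" using Fmem'[OF q(2) r(1) pr] .
  have qc: "\<not> adj q c1 \<and> q \<noteq> c1" "\<not> adj q c2 \<and> q \<noteq> c2"
  proof -
    have "\<not> adj c1 q \<and> c1 \<noteq> q" "\<not> adj c2 q \<and> c2 \<noteq> q"
      using L_far[OF a(4) q(1)] L_far[OF a(5) q(1)] a(2) by auto
    then show "\<not> adj q c1 \<and> q \<noteq> c1" "\<not> adj q c2 \<and> q \<noteq> c2" using sym by blast+
  qed
  have f2: "{p, c1} \<in> Fset adj {q, p}" "{p, c2} \<in> Fset adj {q, p}"
    using Fmem[OF qp a(6)] Fmem[OF qp a(7)] qc by auto
  have qp': "q \<noteq> p" using neq qp by blast
  have pc: "p \<noteq> c1" "p \<noteq> c2" using neq a(6,7) by auto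
  have "q \<notin> {p, c1}" "q \<notin> {p, c2}" "c1 \<notin> {p, c2}" using qp' qc pc a(8) by auto
  then have "{q, r} \<noteq> {p, c1}" "{q, r} \<noteq> {p, c2}" "{p, c1} \<noteq> {p, c2}" by blast+
  then show False using F3[OF gd f1 f2] by blast
qed

lemma ip_single: "x \<in> V \<Longrightarrow> induced_path V adj [x]"
  unfolding induced_path_def using irr by auto

lemma ip_cons: "induced_path V adj P \<Longrightarrow> x \<in> V \<Longrightarrow> x \<notin> set P \<Longrightarrow> adj x (P ! 0)
  \<Longrightarrow> (\<forall>m. 0 < m \<longrightarrow> m < length P \<longrightarrow> \<not> adj x (P ! m)) \<Longrightarrow> induced_path V adj (x # P)"
proof -
  assume a: "induced_path V adj P" "x \<in> V" "x \<notin> set P" "adj x (P ! 0)"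
    "\<forall>m. 0 < m \<longrightarrow> m < length P \<longrightarrow> \<not> adj x (P ! m)"
  have H: "\<forall>i < length P. \<forall>k < length P. adj (P ! i) (P ! k) \<longleftrightarrow> (i = k + 1 \<or> k = i + 1)"
    using a(1) unfolding induced_path_def by blast
  have "\<forall>i < length (x # P). \<forall>k < length (x # P). adj ((x # P) ! i) ((x # P) ! k) \<longleftrightarrow> (i = k + 1 \<or> k = i + 1)"
  proof (intro allI impI)
    fix i k assume ik: "i < length (x # P)" "k < length (x # P)"
    show "adj ((x # P) ! i) ((x # P) ! k) \<longleftrightarrow> (i = k + 1 \<or> k = i + 1)"
    proof (cases i)
      case 0
      show ?thesis
      proof (cases k)
        case 0 then show ?thesis using \<open>i = 0\<close> irr by simp
      next
        case (Suc k') then show ?thesis using \<open>i = 0\<close> a(4) a(5) ik by (cases k') auto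
      qed
    next
      case (Suc i')
      show ?thesis
      proof (cases k)
        case 0
        have "adj (P ! i') x \<longleftrightarrow> i' = 0"
        proof
          assume "adj (P ! i') x"
          then have "adj x (P ! i')" by (rule sym)
          then show "i' = 0" using a(5) ik Suc by auto
        next
          assume "i' = 0" then show "adj (P ! i') x" using a(4) sym by blast
        qed
        then show ?thesis using Suc 0 by simp
      next
        case (Suc k') then show ?thesis using \<open>i = Suc i'\<close> H ik by simp
      qed
    qed
  qed
  then show ?thesis using a unfolding induced_path_def by auto
qed

lemma A_V: "a \<in> A \<Longrightarrow> a \<in> V" using uV vV wV unfolding Aset_def by auto

lemma A_nbr: "a \<in> A \<Longrightarrow> \<exists>a' \<in> A. adj a a'"
  unfolding Aset_def using auv avw sym[OF auv] sym[OF avw] by auto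

lemma good0: "e \<in> Eset V adj u v w 0 \<Longrightarrow> card (Fset adj e) < 3"
  using good J2 by (metis enat_0 enat_ord_simps(2) order_less_le_trans zero_less_numeral enat_numeral)

lemma good1: "e \<in> Eset V adj u v w 1 \<Longrightarrow> card (Fset adj e) < 3"
  using good J2 by (metis one_enat_def enat_ord_simps(2) order_less_le_trans one_less_numeral_iff semiring_norm(76) enat_numeral)

lemma down_path: "p \<in> L k \<Longrightarrow> c \<in> L (Suc k) \<Longrightarrow> adj p c \<Longrightarrow> d \<in> L (Suc (Suc k)) \<Longrightarrow> adj c d
  \<Longrightarrow> \<exists>P. induced_path V adj P \<and> length P = k + 3 \<and> P ! 0 = p \<and>
        (\<forall>m < k + 3. (m \<le> k \<longrightarrow> P ! m \<in> L (k - m)) \<and> (k < m \<longrightarrow> P ! m \<in> A))"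
proof (induction k arbitrary: p c d)
  case 0
  have pB: "p \<in> BB" using 0 L_0 by simp
  obtain a where a: "a \<in> A" "adj p a" using BB_A[OF pB] by blast
  obtain a' where a': "a' \<in> A" "adj a a'" using A_nbr[OF a(1)] by blast
  have pA: "p \<notin> A" "p \<in> V" using L_V[OF 0(1)] by auto
  have aa: "a \<noteq> a'" using neq a'(2) .
  have pa': "\<not> adj p a'"
  proof
    assume pa: "adj p a'"
    have e: "{p, c} \<in> Eset V adj u v w 0" using Emem[OF 0(3) 0(1) 0(2)] .
    have gd: "card (Fset adj {p, c}) < 3" using good0[OF e] .
    have cA: "\<not> adj c a \<and> c \<noteq> a" "\<not> adj c a' \<and> c \<noteq> a'" using noA[OF 0(2)] a(1) a'(1) by auto
    have cp: "adj c p" using sym[OF 0(3)] .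
    have f1: "{p, a} \<in> Fset adj {p, c}" using Fmem'[OF cp a(2)] cA by blast
    have f2: "{p, a'} \<in> Fset adj {p, c}" using Fmem'[OF cp pa] cA by blast
    have pd: "\<not> adj p d \<and> p \<noteq> d"
    proof -
      have "\<not> adj d p \<and> d \<noteq> p" using L_far[OF 0(4) 0(1)] by simp
      then show ?thesis using sym[of p d] by blast
    qed
    have f3: "{c, d} \<in> Fset adj {p, c}" using Fmem[OF 0(3) 0(5)] pd by blast
    have "a \<notin> {p, a'}" "p \<notin> {c, d}" using aa pA a(1) neq[OF 0(3)] pd by auto
    then have "{p, a} \<noteq> {p, a'}" "{p, a} \<noteq> {c, d}" "{p, a'} \<noteq> {c, d}" by blast+
    then show False using F3[OF gd f1 f2 f3] by blast
  qed
  have ip1: "induced_path V adj [a, a']"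
    using ip_cons[OF ip_single[OF A_V[OF a'(1)]] A_V[OF a(1)]] aa a'(2) by simp
  have ip2: "induced_path V adj [p, a, a']"
  proof (rule ip_cons[OF ip1 pA(2)])
    show "p \<notin> set [a, a']" using pA a(1) a'(1) by auto
    show "adj p ([a, a'] ! 0)" using a(2) by simp
    show "\<forall>m. 0 < m \<longrightarrow> m < length [a, a'] \<longrightarrow> \<not> adj p ([a, a'] ! m)"
    proof (intro allI impI)
      fix m assume "0 < m" "m < length [a, a']"
      then have "m = 1" by simp
      then show "\<not> adj p ([a, a'] ! m)" using pa' by simp
    qed
  qed
  have idx: "\<forall>m < 0 + 3. (m \<le> 0 \<longrightarrow> [p, a, a'] ! m \<in> L (0 - m)) \<and> (0 < m \<longrightarrow> [p, a, a'] ! m \<in> A)"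
  proof (intro allI impI)
    fix m :: nat assume "m < 0 + 3"
    then have "m = 0 \<or> m = 1 \<or> m = 2" by auto
    then show "(m \<le> 0 \<longrightarrow> [p, a, a'] ! m \<in> L (0 - m)) \<and> (0 < m \<longrightarrow> [p, a, a'] ! m \<in> A)"
      using 0(1) a(1) a'(1) by auto
  qed
  show ?case using ip2 idx by (intro exI[of _ "[p, a, a']"]) simp
next
  case (Suc k)
  obtain q where q: "q \<in> L k" "adj p q" using parent[OF Suc.prems(1)] by auto
  have qp: "adj q p" using sym[OF q(2)] .
  obtain P where P: "induced_path V adj P" "length P = k + 3" "P ! 0 = q"
    "\<forall>m < k + 3. (m \<le> k \<longrightarrow> P ! m \<in> L (k - m)) \<and> (k < m \<longrightarrow> P ! m \<in> A)"
    using Suc.IH[OF q(1) Suc.prems(1) qp Suc.prems(2) Suc.prems(3)] by blast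
  have pV: "p \<in> V" "p \<notin> A" using L_V[OF Suc.prems(1)] by auto
  have far: "\<not> adj p (P ! m) \<and> p \<noteq> P ! m" if "0 < m" "m < length P" for m
  proof (cases "m \<le> k")
    case True
    then have "P ! m \<in> L (k - m)" using P(4) that by auto
    moreover have "Suc (Suc (k - m)) \<le> Suc k" using that True by simp
    ultimately show ?thesis using L_far[OF Suc.prems(1)] by blast
  next
    case False
    then have "P ! m \<in> A" using P(2,4) that by auto
    then show ?thesis using noA[OF Suc.prems(1)] by blast
  qed
  have "p \<notin> set P"
  proof
    assume "p \<in> set P"
    then obtain m where m: "m < length P" "P ! m = p" by (auto simp: in_set_conv_nth)
    show False
    proof (cases "m = 0")
      case True then show False using m P(3) neq[OF qp] by simp
    next
      case False then show False using far[of m] m by simp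
    qed
  qed
  then have ip: "induced_path V adj (p # P)"
    using ip_cons[OF P(1) pV(1)] q(2) P(3) far by auto
  have idx: "\<forall>m < Suc k + 3. (m \<le> Suc k \<longrightarrow> (p # P) ! m \<in> L (Suc k - m)) \<and> (Suc k < m \<longrightarrow> (p # P) ! m \<in> A)"
  proof (intro allI impI)
    fix m assume m: "m < Suc k + 3"
    show "(m \<le> Suc k \<longrightarrow> (p # P) ! m \<in> L (Suc k - m)) \<and> (Suc k < m \<longrightarrow> (p # P) ! m \<in> A)"
    proof (cases m)
      case 0 then show ?thesis using Suc.prems(1) by simp
    next
      case (Suc m') then show ?thesis using P(4) m by auto
    qed
  qed
  show ?case using ip idx P(2) by (intro exI[of _ "p # P"]) simp
qed

lemma P_far: "\<forall>m < k + 3. (m \<le> k \<longrightarrow> P ! m \<in> L (k - m)) \<and> (k < m \<longrightarrow> P ! m \<in> A) \<Longrightarrow> length P = k + 3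
  \<Longrightarrow> p \<in> L l \<Longrightarrow> 0 < l \<Longrightarrow> m < length P \<Longrightarrow> (k < m \<or> k + 2 \<le> l + m) \<Longrightarrow> \<not> adj p (P ! m) \<and> p \<noteq> P ! m"
proof (cases "m \<le> k")
  case True
  assume a: "\<forall>m < k + 3. (m \<le> k \<longrightarrow> P ! m \<in> L (k - m)) \<and> (k < m \<longrightarrow> P ! m \<in> A)" "length P = k + 3"
    "p \<in> L l" "0 < l" "m < length P" "k < m \<or> k + 2 \<le> l + m"
  then have "P ! m \<in> L (k - m)" "Suc (Suc (k - m)) \<le> l" using True by auto
  then show ?thesis using L_far[OF a(3)] by blast
next
  case False
  assume a: "\<forall>m < k + 3. (m \<le> k \<longrightarrow> P ! m \<in> L (k - m)) \<and> (k < m \<longrightarrow> P ! m \<in> A)" "length P = k + 3"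
    "p \<in> L l" "0 < l" "m < length P" "k < m \<or> k + 2 \<le> l + m"
  then have "P ! m \<in> A" using False by auto
  then show ?thesis using noA[OF a(3,4)] by blast
qed

lemma P_notin: "\<forall>m < k + 3. (m \<le> k \<longrightarrow> P ! m \<in> L (k - m)) \<and> (k < m \<longrightarrow> P ! m \<in> A) \<Longrightarrow> length P = k + 3
  \<Longrightarrow> p \<in> L l \<Longrightarrow> k < l \<Longrightarrow> p \<notin> set P"
proof
  assume a: "\<forall>m < k + 3. (m \<le> k \<longrightarrow> P ! m \<in> L (k - m)) \<and> (k < m \<longrightarrow> P ! m \<in> A)" "length P = k + 3"
    "p \<in> L l" "k < l" "p \<in> set P"
  then obtain m where m: "m < length P" "P ! m = p" by (auto simp: in_set_conv_nth)
  show False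
  proof (cases "m \<le> k")
    case True
    then have "p \<in> L (k - m)" using a(1,2) m by auto
    then show False using L_uniq[OF a(3)] a(4) by fastforce
  next
    case False
    then have "p \<in> A" using a(1,2) m by auto
    then show False using L_V[OF a(3)] by blast
  qed
qed

lemma uparent: "y \<in> L i \<Longrightarrow> 3 \<le> i \<Longrightarrow> enat i \<le> J \<Longrightarrow> x1 \<in> L (i - 1) \<Longrightarrow> x2 \<in> L (i - 1)
  \<Longrightarrow> adj y x1 \<Longrightarrow> adj y x2 \<Longrightarrow> x1 = x2"
proof (rule ccontr)
  assume a: "y \<in> L i" "3 \<le> i" "enat i \<le> J" "x1 \<in> L (i - 1)" "x2 \<in> L (i - 1)"
    "adj y x1" "adj y x2" "x1 \<noteq> x2"
  obtain z where z: "z \<in> L (i - 1 - 1)" "adj x1 z" using parent[OF a(4)] a(2) by auto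
  have "i - 1 - 1 = i - 2" by arith
  then have zl: "z \<in> L (i - 2)" using z(1) by simp
  have zx1: "adj z x1" using sym[OF z(2)] .
  have x1y: "adj x1 y" using sym[OF a(6)] .
  have x2y: "adj x2 y" using sym[OF a(7)] .
  have zy: "\<not> adj z y \<and> z \<noteq> y"
  proof -
    have "\<not> adj y z \<and> y \<noteq> z" using L_far[OF a(1) zl] a(2) by simp
    then show ?thesis using sym[of z y] by blast
  qed
  have z_ne: "z \<noteq> x1" "z \<noteq> x2" using L_uniq[OF zl] a(4,5) a(2) by fastforce+
  have y_ne: "y \<noteq> x1" "y \<noteq> x2" using neq a(6,7) by auto
  show False
  proof (cases "adj x1 x2")
    case True
    obtain t where t: "adj z t" "lowv (i - 2) t" using low[OF zl] by blast
    have x1t: "\<not> adj x1 t \<and> x1 \<noteq> t" using low_far[OF t(2) a(4)] a(2) by simp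
    have kk: "Suc (i - 2) = i - 1" using a(2) by simp
    have e: "{z, x1} \<in> Eset V adj u v w (i - 2)" using Emem[OF zx1 zl] a(4) kk by simp
    have gd: "card (Fset adj {z, x1}) < 3"
    proof (rule good[OF _ e])
      have "enat (i - 2) < enat i" using a(2) by simp
      then show "enat (i - 2) < J" using a(3) by (rule order_less_le_trans)
    qed
    have f1: "{z, t} \<in> Fset adj {z, x1}" using Fmem'[OF z(2) t(1)] x1t by blast
    have f2: "{x1, y} \<in> Fset adj {z, x1}" using Fmem[OF zx1 x1y] zy by blast
    have zx2: "adj z x2"
    proof (rule ccontr)
      assume n: "\<not> adj z x2"
      have f3: "{x1, x2} \<in> Fset adj {z, x1}" using Fmem[OF zx1 True n z_ne(2)] .
      have "z \<notin> {x1, y}" "z \<notin> {x1, x2}" "y \<notin> {x1, x2}" using z_ne zy y_ne by auto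
      then have "{z, t} \<noteq> {x1, y}" "{z, t} \<noteq> {x1, x2}" "{x1, y} \<noteq> {x1, x2}" by blast+
      then show False using F3[OF gd f1 f2 f3] by blast
    qed
    have "x1 = x2"
    proof (rule one_child[OF zl])
      show "0 < i - 2" using a(2) by simp
      show "enat (i - 2) \<le> J" using a(3) order_trans[of "enat (i - 2)" "enat i" J] by simp
      show "x1 \<in> L (Suc (i - 2))" "x2 \<in> L (Suc (i - 2))" using a(4,5) kk by simp_all
      show "adj z x1" "adj z x2" using zx1 zx2 by simp_all
    qed
    then show False using a(8) by simp
  next
    case False
    have nzx2: "\<not> adj z x2"
    proof
      assume zx2: "adj z x2"
      have "induced_C4 adj y x1 z x2"
        unfolding induced_C4_def using a(6) z(2) zx2 x2y zy False y_ne z_ne a(8) sym[of y z] by auto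
      then show False using noC4 by blast
    qed
    have kk: "Suc (i - 2) = i - 1" "Suc (Suc (i - 2)) = i" using a(2) by simp_all
    obtain P where P: "induced_path V adj P" "length P = (i - 2) + 3" "P ! 0 = z"
      "\<forall>m < (i - 2) + 3. (m \<le> i - 2 \<longrightarrow> P ! m \<in> L (i - 2 - m)) \<and> (i - 2 < m \<longrightarrow> P ! m \<in> A)"
      using down_path[OF zl _ zx1 _ x1y] a(1,4) kk by auto
    have i1: "0 < i - 1" "0 < i" using a(2) by auto
    have ip1: "induced_path V adj (x1 # P)"
    proof (rule ip_cons[OF P(1)])
      show "x1 \<in> V" using L_V[OF a(4)] by blast
      show "x1 \<notin> set P" using P_notin[OF P(4) P(2) a(4)] a(2) by simp
      show "adj x1 (P ! 0)" using P(3) z(2) by simp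
      show "\<forall>m. 0 < m \<longrightarrow> m < length P \<longrightarrow> \<not> adj x1 (P ! m)"
      proof (intro allI impI)
        fix m assume m: "0 < m" "m < length P"
        have "i - 2 + 2 \<le> i - 1 + m" using m a(2) by arith
        then show "\<not> adj x1 (P ! m)" using P_far[OF P(4) P(2) a(4) i1(1) m(2)] by blast
      qed
    qed
    have ip2: "induced_path V adj (y # x1 # P)"
    proof (rule ip_cons[OF ip1])
      show "y \<in> V" using L_V[OF a(1)] by blast
      show "y \<notin> set (x1 # P)" using P_notin[OF P(4) P(2) a(1)] y_ne a(2) by simp
      show "adj y ((x1 # P) ! 0)" using a(6) by simp
      show "\<forall>m. 0 < m \<longrightarrow> m < length (x1 # P) \<longrightarrow> \<not> adj y ((x1 # P) ! m)"
      proof (intro allI impI)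
        fix m assume m: "0 < m" "m < length (x1 # P)"
        then obtain m' where m': "m = Suc m'" "m' < length P" by (cases m) auto
        have "i - 2 + 2 \<le> i + m'" using a(2) by arith
        then show "\<not> adj y ((x1 # P) ! m)" using P_far[OF P(4) P(2) a(1) i1(2) m'(2)] m' by auto
      qed
    qed
    have ip3: "induced_path V adj (x2 # y # x1 # P)"
    proof (rule ip_cons[OF ip2])
      show "x2 \<in> V" using L_V[OF a(5)] by blast
      show "x2 \<notin> set (y # x1 # P)" using P_notin[OF P(4) P(2) a(5)] y_ne a(2,8) by auto
      show "adj x2 ((y # x1 # P) ! 0)" using x2y by simp
      show "\<forall>m. 0 < m \<longrightarrow> m < length (y # x1 # P) \<longrightarrow> \<not> adj x2 ((y # x1 # P) ! m)"
      proof (intro allI impI)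
        fix m assume m: "0 < m" "m < length (y # x1 # P)"
        show "\<not> adj x2 ((y # x1 # P) ! m)"
        proof (cases "m = 1")
          case True then show ?thesis using False sym[of x2 x1] by auto
        next
          case m1: False
          then obtain m' where m': "m = Suc (Suc m')" "m' < length P" using m by (cases m; cases "m - 1") auto
          show ?thesis
          proof (cases "m' = 0")
            case True then show ?thesis using m' P(3) nzx2 sym[of x2 z] by auto
          next
            case False
            have "i - 2 + 2 \<le> i - 1 + m'" using a(2) False by arith
            then show ?thesis using P_far[OF P(4) P(2) a(5) i1(1) m'(2)] m' by auto
          qed
        qed
      qed
    qed
    have "length (x2 # y # x1 # P) \<ge> 7" using P(2) a(2) by simp
    then show False using noP7 ip3 by fastforce
  qed
qed

abbreviation "SS \<equiv> {x. \<exists>i. 2 \<le> i \<and> enat i \<le> J \<and> x \<in> L i}"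

lemma deg: "y \<in> L i \<Longrightarrow> 2 \<le> i \<Longrightarrow> enat i \<le> J \<Longrightarrow>
  \<exists>x. (\<forall>y1. y1 \<in> SS \<longrightarrow> adj y y1 \<longrightarrow> y1 \<in> L (i - 1) \<longrightarrow> y1 = x) \<and>
      (\<forall>y1 y2. y1 \<in> SS \<longrightarrow> y2 \<in> SS \<longrightarrow> adj y y1 \<longrightarrow> adj y y2 \<longrightarrow> y1 \<notin> L (i - 1) \<longrightarrow> y2 \<notin> L (i - 1) \<longrightarrow> y1 = y2)"
proof -
  assume a: "y \<in> L i" "2 \<le> i" "enat i \<le> J"
  obtain x where x: "x \<in> L (i - 1)" "adj y x" using parent[OF a(1)] a(2) by auto
  have xy: "adj x y" using sym[OF x(2)] .
  have kk: "Suc (i - 1) = i" using a(2) by simp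
  have e: "{x, y} \<in> Eset V adj u v w (i - 1)" using Emem[OF xy x(1)] a(1) kk by simp
  have gd: "card (Fset adj {x, y}) < 3"
  proof (rule good[OF _ e])
    have "enat (i - 1) < enat i" using a(2) by simp
    then show "enat (i - 1) < J" using a(3) by (rule order_less_le_trans)
  qed
  obtain z where z: "adj x z" "lowv (i - 1) z" using low[OF x(1)] by blast
  have yz: "\<not> adj y z \<and> y \<noteq> z" using low_far[OF z(2) a(1)] a(2) by simp
  have f1: "{x, z} \<in> Fset adj {x, y}" using Fmem'[OF x(2) z(1)] yz by blast
  have key: "\<not> adj x y1 \<and> x \<noteq> y1" if y1: "y1 \<in> SS" "adj y y1" "y1 \<notin> L (i - 1)" for y1
  proof -
    obtain m1 where m1: "m1 \<ge> 2" "enat m1 \<le> J" "y1 \<in> L m1" using y1(1) by blast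
    have "x \<noteq> y1" using x(1) y1(3) by blast
    moreover have "\<not> adj x y1"
    proof
      assume xy1: "adj x y1"
      have "m1 \<le> Suc (i - 1)" using L_adj[OF xy1 x(1) m1(3)] .
      moreover have "i \<le> Suc m1" using L_adj[OF y1(2) a(1) m1(3)] L_adj[OF sym[OF y1(2)] m1(3) a(1)] by simp
      moreover have "m1 \<noteq> i - 1" using y1(3) m1(3) by blast
      ultimately have "m1 = i" using a(2) by arith
      then have "y1 = y"
        using one_child[OF x(1) _ _ _ _ xy1 xy] a m1(3) kk order_trans[of "enat (i - 1)" "enat i" J] by simp
      then show False using y1(2) irr by simp
    qed
    ultimately show ?thesis by blast
  qed
  have "\<forall>y1 y2. y1 \<in> SS \<longrightarrow> y2 \<in> SS \<longrightarrow> adj y y1 \<longrightarrow> adj y y2 \<longrightarrow> y1 \<notin> L (i - 1) \<longrightarrow> y2 \<notin> L (i - 1) \<longrightarrow> y1 = y2"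
  proof (intro allI impI)
    fix y1 y2 assume h: "y1 \<in> SS" "y2 \<in> SS" "adj y y1" "adj y y2" "y1 \<notin> L (i - 1)" "y2 \<notin> L (i - 1)"
    show "y1 = y2"
    proof (rule ccontr)
      assume ne: "y1 \<noteq> y2"
      have k1: "\<not> adj x y1 \<and> x \<noteq> y1" using key h(1,3,5) by blast
      have k2: "\<not> adj x y2 \<and> x \<noteq> y2" using key h(2,4,6) by blast
      have f2: "{y, y1} \<in> Fset adj {x, y}" using Fmem[OF xy h(3)] k1 by blast
      have f3: "{y, y2} \<in> Fset adj {x, y}" using Fmem[OF xy h(4)] k2 by blast
      have "x \<notin> {y, y1}" "x \<notin> {y, y2}" "y1 \<notin> {y, y2}" using k1 k2 ne neq[OF xy] neq[OF h(3)] by auto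
      then have "{x, z} \<noteq> {y, y1}" "{x, z} \<noteq> {y, y2}" "{y, y1} \<noteq> {y, y2}" by blast+
      then show False using F3[OF gd f1 f2 f3] by blast
    qed
  qed
  moreover have "\<forall>y1. y1 \<in> SS \<longrightarrow> adj y y1 \<longrightarrow> y1 \<in> L (i - 1) \<longrightarrow> y1 = x"
  proof (intro allI impI)
    fix y1 assume h: "y1 \<in> SS" "adj y y1" "y1 \<in> L (i - 1)"
    obtain m1 where m1: "m1 \<ge> 2" "enat m1 \<le> J" "y1 \<in> L m1" using h(1) by blast
    have "m1 = i - 1" using L_uniq[OF m1(3) h(3)] .
    then have "3 \<le> i" using m1(1) by simp
    then show "y1 = x" using uparent[OF a(1) _ a(3) h(3) x(1) h(2) x(2)] by simp
  qed
  ultimately show ?thesis by blast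
qed

lemma SS_lev: "y \<in> SS \<Longrightarrow> \<exists>i. 2 \<le> i \<and> enat i \<le> J \<and> y \<in> L i" by blast

lemma deg2: "y \<in> SS \<Longrightarrow> a \<in> SS \<Longrightarrow> b \<in> SS \<Longrightarrow> c \<in> SS \<Longrightarrow> adj y a \<Longrightarrow> adj y b \<Longrightarrow> adj y c
  \<Longrightarrow> a = b \<or> a = c \<or> b = c"
proof -
  assume h: "y \<in> SS" "a \<in> SS" "b \<in> SS" "c \<in> SS" "adj y a" "adj y b" "adj y c"
  obtain i where i: "2 \<le> i" "enat i \<le> J" "y \<in> L i" using h(1) by blast
  obtain x where x: "\<forall>y1. y1 \<in> SS \<longrightarrow> adj y y1 \<longrightarrow> y1 \<in> L (i - 1) \<longrightarrow> y1 = x"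
     "\<forall>y1 y2. y1 \<in> SS \<longrightarrow> y2 \<in> SS \<longrightarrow> adj y y1 \<longrightarrow> adj y y2 \<longrightarrow> y1 \<notin> L (i - 1) \<longrightarrow> y2 \<notin> L (i - 1) \<longrightarrow> y1 = y2"
    using deg[OF i(3) i(1) i(2)] by blast
  have ea: "a \<in> L (i - 1) \<Longrightarrow> a = x" "b \<in> L (i - 1) \<Longrightarrow> b = x" "c \<in> L (i - 1) \<Longrightarrow> c = x"
    using x(1) h by blast+
  have nab: "a \<notin> L (i - 1) \<Longrightarrow> b \<notin> L (i - 1) \<Longrightarrow> a = b"
    and nac: "a \<notin> L (i - 1) \<Longrightarrow> c \<notin> L (i - 1) \<Longrightarrow> a = c"
    and nbc: "b \<notin> L (i - 1) \<Longrightarrow> c \<notin> L (i - 1) \<Longrightarrow> b = c"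
    using x(2) h by blast+
  show ?thesis using ea nab nac nbc by blast
qed

lemma deg1: "y \<in> L 2 \<Longrightarrow> a \<in> SS \<Longrightarrow> b \<in> SS \<Longrightarrow> adj y a \<Longrightarrow> adj y b \<Longrightarrow> a = b"
proof -
  assume h: "y \<in> L 2" "a \<in> SS" "b \<in> SS" "adj y a" "adj y b"
  have J2': "enat 2 \<le> J" using J2 by (simp add: enat_numeral)
  have x: "\<forall>y1 y2. y1 \<in> SS \<longrightarrow> y2 \<in> SS \<longrightarrow> adj y y1 \<longrightarrow> adj y y2 \<longrightarrow> y1 \<notin> L (2 - 1) \<longrightarrow> y2 \<notin> L (2 - 1) \<longrightarrow> y1 = y2"
    using deg[OF h(1) _ J2'] by blast
  have "a \<notin> L 1" "b \<notin> L 1"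
  proof -
    obtain m1 where "m1 \<ge> 2" "a \<in> L m1" using h(2) by blast
    then show "a \<notin> L 1" using L_uniq[of a m1 1] by auto
    obtain m2 where "m2 \<ge> 2" "b \<in> L m2" using h(3) by blast
    then show "b \<notin> L 1" using L_uniq[of b m2 1] by auto
  qed
  then show ?thesis using x[rule_format, of a b] h by simp
qed

definition rel :: "'a set \<Rightarrow> 'a \<Rightarrow> 'a \<Rightarrow> bool" where
  "rel S a b \<longleftrightarrow> adj a b \<and> a \<in> S \<and> b \<in> S"

definition cmp :: "'a set \<Rightarrow> 'a \<Rightarrow> 'a set" where
  "cmp S x = {y. \<exists>xs. walk_in adj S xs \<and> hd xs = x \<and> last xs = y}"

lemma components_cmp: "components adj S = {cmp S x | x. x \<in> S}"
  unfolding components_def cmp_def by simp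

lemma walk_rel: "walk_in adj S xs \<Longrightarrow> (rel S)\<^sup>*\<^sup>* (hd xs) (last xs)"
proof (induction xs)
  case Nil then show ?case unfolding walk_in_def by simp
next
  case (Cons x xs)
  show ?case
  proof (cases xs)
    case Nil then show ?thesis by simp
  next
    case (Cons y ys)
    have h: "x \<in> S" "adj x (hd xs)" "walk_in adj S xs" using walk_cons Cons.prems Cons by auto
    have "hd xs \<in> S" using h(3) Cons unfolding walk_in_def by auto
    then have "rel S x (hd xs)" using h unfolding rel_def by simp
    moreover have "(rel S)\<^sup>*\<^sup>* (hd xs) (last xs)" using Cons.IH h(3) .
    ultimately show ?thesis using Cons by (simp add: converse_rtranclp_into_rtranclp)
  qed
qed

lemma rel_walk: "(rel S)\<^sup>*\<^sup>* x y \<Longrightarrow> x \<in> S \<Longrightarrow> \<exists>xs. walk_in adj S xs \<and> hd xs = x \<and> last xs = y"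
proof (induction rule: converse_rtranclp_induct)
  case base
  then show ?case unfolding walk_in_def by (intro exI[of _ "[y]"]) simp
next
  case (step x z)
  have "z \<in> S" "adj x z" using step(1) unfolding rel_def by auto
  then obtain xs where xs: "walk_in adj S xs" "hd xs = z" "last xs = y" using step by blast
  have ne: "xs \<noteq> []" using xs unfolding walk_in_def by simp
  have "walk_in adj S (x # xs)" using walk_cons step(4) xs \<open>adj x z\<close> ne by simp
  then show ?case using xs ne by (intro exI[of _ "x # xs"]) simp
qed

lemma cmp_iff: "x \<in> S \<Longrightarrow> y \<in> cmp S x \<longleftrightarrow> (rel S)\<^sup>*\<^sup>* x y"
  unfolding cmp_def using walk_rel rel_walk by fastforce

lemma rel_sym: "symp (rel S)"
  unfolding symp_def rel_def using sym by blast

lemma relstar_sym: "(rel S)\<^sup>*\<^sup>* x y \<Longrightarrow> (rel S)\<^sup>*\<^sup>* y x"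
  using symp_rtranclp[OF rel_sym] by (meson sympD)

lemma relstar_in: "(rel S)\<^sup>*\<^sup>* x y \<Longrightarrow> x \<in> S \<Longrightarrow> y \<in> S"
  by (induction rule: rtranclp_induct) (auto simp: rel_def)

lemma exit: "(rel S)\<^sup>*\<^sup>* a b \<Longrightarrow> a \<in> X \<Longrightarrow> b \<notin> X \<Longrightarrow> \<exists>c d. c \<in> X \<and> d \<notin> X \<and> rel S c d \<and> (rel S)\<^sup>*\<^sup>* a d"
proof (induction rule: rtranclp_induct)
  case base then show ?case by simp
next
  case (step y z)
  show ?case
  proof (cases "y \<in> X")
    case True then show ?thesis using step by (meson rtranclp.rtrancl_into_rtrancl)
  next
    case False then show ?thesis using step by blast
  qed
qed

lemma desc: "y \<in> L i \<Longrightarrow> 2 \<le> i \<Longrightarrow> enat i \<le> J \<Longrightarrow> (rel SS)\<^sup>*\<^sup>* x0 y \<Longrightarrow> \<exists>s \<in> L 2. (rel SS)\<^sup>*\<^sup>* x0 s"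
proof (induction i arbitrary: y)
  case 0
  from 0(2) show ?case by simp
next
  case (Suc n)
  note pr = Suc.prems
  show ?case
  proof (cases "n = 1")
    case True
    then have "y \<in> L 2" using pr(1) by (simp add: numeral_2_eq_2)
    then show ?thesis using pr(4) by (rule bexI[rotated])
  next
    case False
    then have n2: "2 \<le> n" using pr(2) by simp
    have "\<exists>p \<in> L (Suc n - 1). adj y p" using parent[OF pr(1)] by simp
    then obtain p where p: "p \<in> L n" "adj y p" by auto
    have Jn: "enat n \<le> J" using pr(3) order_trans[of "enat n" "enat (Suc n)" J] by simp
    have yS: "y \<in> SS" using pr(1,2,3) by (intro CollectI exI[of _ "Suc n"]) simp
    have pS: "p \<in> SS" using p(1) n2 Jn by (intro CollectI exI[of _ n]) simp
    have "rel SS y p" using p(2) yS pS unfolding rel_def by simp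
    then have "(rel SS)\<^sup>*\<^sup>* x0 p" using pr(4) by (rule rtranclp.rtrancl_into_rtrancl[rotated])
    then show ?thesis using Suc.IH[OF p(1) n2 Jn] by blast
  qed
qed

lemma ip_facts: "induced_path V adj xs \<Longrightarrow> i < length xs \<Longrightarrow> k < length xs \<Longrightarrow>
   adj (xs ! i) (xs ! k) \<longleftrightarrow> (i = k + 1 \<or> k = i + 1)"
  unfolding induced_path_def by blast

lemma SS_V: "y \<in> SS \<Longrightarrow> y \<in> V" using L_V by blast

lemma extend:
  assumes ip: "induced_path V adj xs" and hs: "hd xs = s" and sub: "set xs \<subseteq> SS"
    and q: "q \<in> SS" "q \<notin> set xs" and i: "i < length xs" "adj (xs ! i) q"
    and d1: "\<forall>a b. a \<in> SS \<longrightarrow> b \<in> SS \<longrightarrow> adj s a \<longrightarrow> adj s b \<longrightarrow> a = b"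
  shows "induced_path V adj (xs @ [q])"
proof -
  define n where "n = length xs"
  have ne: "xs \<noteq> []" and dist: "distinct xs" using ip unfolding induced_path_def by auto
  have s0: "xs ! 0 = s" using hs ne by (simp add: hd_conv_nth)
  have mem: "xs ! m \<in> SS" if "m < n" for m
  proof -
    have "xs ! m \<in> set xs" using that n_def by simp
    then show ?thesis using subsetD[OF sub] by blast
  qed
  have qne: "xs ! m \<noteq> q" if "m < n" for m using q(2) that n_def by auto
  have no: "\<not> adj (xs ! m) q" if m: "Suc m < n" for m
  proof
    assume a: "adj (xs ! m) q"
    have a1: "adj (xs ! m) (xs ! Suc m)" using ip_facts[OF ip, of m "Suc m"] m n_def by simp
    show False
    proof (cases m)
      case 0
      then have "xs ! Suc m = q" using d1 mem[of "Suc m"] q(1) a a1 s0 m by blast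
      then show False using qne[OF m] by simp
    next
      case (Suc m')
      have a2: "adj (xs ! m) (xs ! m')" using ip_facts[OF ip, of m m'] m Suc n_def by simp
      have "xs ! Suc m = xs ! m' \<or> xs ! Suc m = q \<or> xs ! m' = q"
        using deg2[OF mem[of m] mem[of "Suc m"] mem[of m'] q(1) a1 a2 a] m Suc by simp
      moreover have "xs ! Suc m \<noteq> xs ! m'" using dist m Suc n_def by (simp add: nth_eq_iff_index_eq)
      ultimately show False using qne m Suc by auto
    qed
  qed
  have last: "i = n - 1"
  proof (rule ccontr)
    assume "i \<noteq> n - 1"
    then have "Suc i < n" using i(1) n_def by simp
    then show False using no i(2) by blast
  qed
  have qV: "q \<in> V" using SS_V q(1) .
  have "\<forall>a < length (xs @ [q]). \<forall>b < length (xs @ [q]). adj ((xs @ [q]) ! a) ((xs @ [q]) ! b) \<longleftrightarrow> (a = b + 1 \<or> b = a + 1)"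
  proof (intro allI impI)
    fix a b assume ab: "a < length (xs @ [q])" "b < length (xs @ [q])"
    show "adj ((xs @ [q]) ! a) ((xs @ [q]) ! b) \<longleftrightarrow> (a = b + 1 \<or> b = a + 1)"
    proof (cases "a < n")
      case True
      show ?thesis
      proof (cases "b < n")
        case True
        then show ?thesis using \<open>a < n\<close> ip_facts[OF ip, of a b] n_def by (simp add: nth_append)
      next
        case False
        then have b: "b = n" using ab n_def by simp
        have "adj (xs ! a) q \<longleftrightarrow> a = n - 1"
        proof
          assume "adj (xs ! a) q"
          then show "a = n - 1" using no[of a] \<open>a < n\<close> by (cases "Suc a < n") auto
        next
          assume "a = n - 1" then show "adj (xs ! a) q" using last i(2) by simp
        qed
        then show ?thesis using b \<open>a < n\<close> n_def by (auto simp: nth_append)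
      qed
    next
      case False
      then have a: "a = n" using ab n_def by simp
      show ?thesis
      proof (cases "b < n")
        case True
        have "adj q (xs ! b) \<longleftrightarrow> b = n - 1"
        proof
          assume "adj q (xs ! b)"
          then have "adj (xs ! b) q" by (rule sym)
          then show "b = n - 1" using no[of b] \<open>b < n\<close> by (cases "Suc b < n") auto
        next
          assume "b = n - 1" then show "adj q (xs ! b)" using last i(2) sym by simp
        qed
        then show ?thesis using a \<open>b < n\<close> n_def by (auto simp: nth_append)
      next
        case False
        then have "b = n" using ab n_def by simp
        then show ?thesis using a irr n_def by (simp add: nth_append)
      qed
    qed
  qed
  moreover have "distinct (xs @ [q])" using dist q(2) by simp
  moreover have "set (xs @ [q]) \<subseteq> V" using ip qV unfolding induced_path_def by auto
  ultimately show ?thesis unfolding induced_path_def by simp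
qed

lemma J2': "enat 2 \<le> J" using J2 by (simp add: enat_numeral)

lemma L2_SS: "s \<in> L 2 \<Longrightarrow> s \<in> SS" using J2' by blast

lemma comp_rep: "K \<in> components adj SS \<Longrightarrow> \<exists>s \<in> L 2. K = cmp SS s"
proof -
  assume "K \<in> components adj SS"
  then obtain x0 where x0: "K = cmp SS x0" "x0 \<in> SS" using components_cmp by blast
  then obtain i where i: "2 \<le> i" "enat i \<le> J" "x0 \<in> L i" by blast
  obtain s where s: "s \<in> L 2" "(rel SS)\<^sup>*\<^sup>* x0 s" using desc[OF i(3) i(1) i(2) rtranclp.rtrancl_refl] by blast
  have sS: "s \<in> SS" using L2_SS[OF s(1)] .
  have "K = cmp SS s"
  proof (rule set_eqI)
    fix y
    have "y \<in> K \<longleftrightarrow> (rel SS)\<^sup>*\<^sup>* x0 y" using cmp_iff[OF x0(2)] x0(1) by simp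
    also have "\<dots> \<longleftrightarrow> (rel SS)\<^sup>*\<^sup>* s y"
      using s(2) relstar_sym[OF s(2)] rtranclp_trans[of "rel SS" x0 s y] rtranclp_trans[of "rel SS" s x0 y] by blast
    also have "\<dots> \<longleftrightarrow> y \<in> cmp SS s" using cmp_iff[OF sS] by simp
    finally show "y \<in> K \<longleftrightarrow> y \<in> cmp SS s" .
  qed
  then show ?thesis using s(1) by blast
qed

lemma comp_path: "K \<in> components adj SS \<Longrightarrow> \<exists>xs. induced_path V adj xs \<and> set xs = K"
proof -
  assume "K \<in> components adj SS"
  then obtain s where s: "s \<in> L 2" "K = cmp SS s" using comp_rep by blast
  have sS: "s \<in> SS" using L2_SS[OF s(1)] .
  have Kiff: "y \<in> K \<longleftrightarrow> (rel SS)\<^sup>*\<^sup>* s y" for y using cmp_iff[OF sS] s(2) by simp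
  have KS: "K \<subseteq> SS"
  proof
    fix y assume "y \<in> K"
    then have "(rel SS)\<^sup>*\<^sup>* s y" using Kiff by blast
    then show "y \<in> SS" using relstar_in sS by blast
  qed
  have "K \<subseteq> V" using KS SS_V by blast
  then have finK: "finite K" using finV finite_subset by blast
  have sK: "s \<in> K" using Kiff[of s] by blast
  have sV: "s \<in> V" using SS_V[OF sS] .
  have d1: "\<forall>a b. a \<in> SS \<longrightarrow> b \<in> SS \<longrightarrow> adj s a \<longrightarrow> adj s b \<longrightarrow> a = b" using deg1[OF s(1)] by blast
  define Pth where "Pth xs \<longleftrightarrow> induced_path V adj xs \<and> hd xs = s \<and> set xs \<subseteq> K" for xs
  have P0: "Pth [s]" unfolding Pth_def using ip_single[OF sV] sK by simp
  have bound: "length xs \<le> card K" if "Pth xs" for xs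
  proof -
    have "distinct xs" "set xs \<subseteq> K" using that unfolding Pth_def induced_path_def by auto
    then have "card (set xs) \<le> card K" "card (set xs) = length xs"
      using card_mono[OF finK] distinct_card by auto
    then show ?thesis by linarith
  qed
  have ex1: "\<exists>xs. Pth xs \<and> length xs = 1" using P0 by (intro exI[of _ "[s]"]) simp
  have bd: "\<forall>m. (\<exists>xs. Pth xs \<and> length xs = m) \<longrightarrow> m \<le> card K" using bound by blast
  obtain n where n: "\<exists>xs. Pth xs \<and> length xs = n" "\<forall>m. (\<exists>xs. Pth xs \<and> length xs = m) \<longrightarrow> m \<le> n"
    using Nat.ex_has_greatest_nat[of "\<lambda>n. \<exists>xs. Pth xs \<and> length xs = n", OF ex1 bd] by blast
  then obtain xs where xs: "Pth xs" "length xs = n" by blast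
  have ip: "induced_path V adj xs" and hs: "hd xs = s" and sub: "set xs \<subseteq> K" using xs(1) unfolding Pth_def by auto
  have ne: "xs \<noteq> []" using ip unfolding induced_path_def by simp
  have "set xs = K"
  proof (rule ccontr)
    assume "set xs \<noteq> K"
    then obtain y where y: "y \<in> K" "y \<notin> set xs" using sub by blast
    have "s \<in> set xs" using hs ne by auto
    moreover have "(rel SS)\<^sup>*\<^sup>* s y" using Kiff y(1) by blast
    ultimately obtain c q where cq: "c \<in> set xs" "q \<notin> set xs" "rel SS c q" "(rel SS)\<^sup>*\<^sup>* s q"
      using exit[of SS s y "set xs"] y(2) by blast
    have qK: "q \<in> K" using Kiff cq(4) by blast
    have qS: "q \<in> SS" using qK KS by blast
    obtain i where i: "i < length xs" "xs ! i = c" using cq(1) by (auto simp: in_set_conv_nth)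
    have "adj (xs ! i) q" using cq(3) i(2) unfolding rel_def by simp
    moreover have "set xs \<subseteq> SS" using sub KS by blast
    ultimately have ip2: "induced_path V adj (xs @ [q])"
      using extend[OF ip hs _ qS cq(2) i(1) _ d1] by blast
    have "hd (xs @ [q]) = s" using hs ne by simp
    moreover have "set (xs @ [q]) \<subseteq> K" using sub qK by simp
    ultimately have "Pth (xs @ [q])" unfolding Pth_def using ip2 by blast
    moreover have "length (xs @ [q]) = Suc n" using xs(2) by simp
    ultimately have "Suc n \<le> n" using n(2) by blast
    then show False by simp
  qed
  then show ?thesis using ip by blast
qed

lemma comp_card: "card (components adj SS) \<le> card (Eset V adj u v w 1)"
proof -
  define f where "f e = \<Union> (cmp SS ` (e \<inter> L 2))" for e
  have sub: "components adj SS \<subseteq> f ` Eset V adj u v w 1"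
  proof
    fix K assume "K \<in> components adj SS"
    then obtain s where s: "s \<in> L 2" "K = cmp SS s" using comp_rep by blast
    have "\<exists>x \<in> L (2 - 1). adj s x" using parent[OF s(1)] by simp
    then obtain x where x: "x \<in> L 1" "adj s x" by auto
    have s2: "s \<in> L (Suc 1)" using s(1) by (simp add: numeral_2_eq_2)
    have e: "{x, s} \<in> Eset V adj u v w 1" using Emem[OF sym[OF x(2)] x(1) s2] .
    have "x \<notin> L 2" using L_uniq[OF x(1)] by fastforce
    then have "{x, s} \<inter> L 2 = {s}" using s(1) by auto
    then have "f {x, s} = K" unfolding f_def using s(2) by simp
    then show "K \<in> f ` Eset V adj u v w 1" using e by (metis imageI)
  qed
  have finE: "finite (Eset V adj u v w 1)"
  proof -
    have "Eset V adj u v w 1 \<subseteq> Pow V" unfolding Eset_def using inV by blast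
    then show ?thesis using finV finite_subset by blast
  qed
  have "card (components adj SS) \<le> card (f ` Eset V adj u v w 1)"
    using card_mono[OF finite_imageI[OF finE] sub] .
  also have "\<dots> \<le> card (Eset V adj u v w 1)" using card_image_le[OF finE] .
  finally show ?thesis .
qed

end

theorem corollary2:
  fixes V :: "'a set" and adj :: "'a \<Rightarrow> 'a \<Rightarrow> bool" and u v w :: 'a
  assumes "simple_graph V adj"
    and "\<forall>e \<in> edges adj. card (Fset adj e) < 4"
    and "\<forall>a b c d. \<not> induced_C4 adj a b c d"
    and "\<forall>xs. induced_path V adj xs \<longrightarrow> length xs < 7"
    and "u \<in> V" "v \<in> V" "w \<in> V" "u \<noteq> w"
    and "adj u v" "adj v w" "\<not> adj u w"
    and "jidx V adj u v w \<ge> 2"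
  shows "(\<forall>K \<in> components adj {x. \<exists>i. 2 \<le> i \<and> enat i \<le> jidx V adj u v w \<and> x \<in> Bl V adj u v w i}.
            \<exists>xs. induced_path V adj xs \<and> set xs = K)
       \<and> card (components adj {x. \<exists>i. 2 \<le> i \<and> enat i \<le> jidx V adj u v w \<and> x \<in> Bl V adj u v w i})
           \<le> card (Eset V adj u v w 1)"
proof -
  interpret cg V adj u v w using assms by (unfold_locales) auto
  show ?thesis using comp_path comp_card by blast
qed

end
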